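(* Let $b_1,\dots,b_n\in\textsc{Gs}$ be valuations over $m$ items. Then for any partition $\mathbf{x}_1,\dots,\mathbf{x}_n\in\{0,1\}^m$ of the items (i.e. $\sum_i\mathbf{x}_i=\mathbf{1}$), $$\sum_i W^{\mathbf{b}_{-i}}(\mathbf{x}_i\mid\mathbf{1}-\mathbf{x}_i)\le W^{\mathbf{b}}(\mathbf{1}).$$
   Context: A valuation is $v:\{0,1\}^m\to\mathbb{R}_+$ with $v(\mathbf{0})=0$ and monotone; it is extended to $\mathbb{Z}^m_+$ by $v(\mathbf{x})=v(\min(\mathbf{x},\mathbf{1}))$. Demand: $D_v(\mathbf{p})=\arg\max_{\mathbf{x}\in\{0,1\}^m}[v(\mathbf{x})-\mathbf{p}\cdot\mathbf{x}]$. $v\in\textsc{Gs}$ if for all prices $\mathbf{p}\le\mathbf{q}$ in $\mathbb{R}^m$, with $S=\{j:p_j=q_j\}$, and all $\mathbf{x}\in D_v(\mathbf{p})$, there is $\mathbf{y}\in D_v(\mathbf{q})$ with $y_j\ge x_j$ for all $j\in S$. For $\mathbf{x}\in\mathbb{Z}^m_+$: $W^{\mathbf{b}}(\mathbf{x})=\max\{\sum_k b_k(\mathbf{y}_k):\sum_k\mathbf{y}_k\le\mathbf{x},\mathbf{y}_k\in\{0,1\}^m\}$ and $W^{\mathbf{b}_{-i}}(\mathbf{x})=\max\{\sum_{k\ne i}b_k(\mathbf{y}_k):\sum_{k\ne i}\mathbf{y}_k\le\mathbf{x},\mathbf{y}_k\in\{0,1\}^m\}$. For a function $f$ on $\mathbb{Z}^m_+$,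 $f(\mathbf{y}\mid\mathbf{x})=f(\mathbf{y}+\mathbf{x})-f(\mathbf{x})$. *)

theory Defs
  imports Complex_Main
begin

(* Items form a finite type 'm (m = CARD('m)); vectors in Z^m_+ are functions 'm => nat,
   vectors in {0,1}^m are those with all entries <= 1. *)

definition binary :: "('m \<Rightarrow> nat) \<Rightarrow> bool" where
  "binary x \<longleftrightarrow> (\<forall>j. x j \<le> 1)"

definition one_vec :: "'m \<Rightarrow> nat" where
  "one_vec = (\<lambda>_. 1)"

definition valuation :: "(('m::finite \<Rightarrow> nat) \<Rightarrow> real) \<Rightarrow> bool" where
  "valuation v \<longleftrightarrow>
     v (\<lambda>_. 0) = 0 \<and>
     (\<forall>x. binary x \<longrightarrow> v x \<ge> 0) \<and>
     (\<forall>x y. binary x \<and> binary y \<and> x \<le> y \<longrightarrow> v x \<le> v y) \<and>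
     (\<forall>x. v x = v (\<lambda>j. min (x j) 1))"

definition demand :: "(('m::finite \<Rightarrow> nat) \<Rightarrow> real) \<Rightarrow> ('m \<Rightarrow> real) \<Rightarrow> ('m \<Rightarrow> nat) set" where
  "demand v p = {x. binary x \<and>
      (\<forall>z. binary z \<longrightarrow> v z - (\<Sum>j\<in>UNIV. p j * real (z j)) \<le> v x - (\<Sum>j\<in>UNIV. p j * real (x j)))}"

definition gross_substitutes :: "(('m::finite \<Rightarrow> nat) \<Rightarrow> real) \<Rightarrow> bool" where
  "gross_substitutes v \<longleftrightarrow>
     (\<forall>p q. p \<le> q \<longrightarrow> (\<forall>x\<in>demand v p. \<exists>y\<in>demand v q.
        \<forall>j\<in>{j. p j = q j}. y j \<ge> x j))"

(* W^b(x) = welfare b {..<n} x;  W^{b_{-i}}(x) = welfare b ({..<n} - {i}) x. *)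
definition welfare :: "(nat \<Rightarrow> ('m::finite \<Rightarrow> nat) \<Rightarrow> real) \<Rightarrow> nat set \<Rightarrow> ('m \<Rightarrow> nat) \<Rightarrow> real" where
  "welfare b K x = Max {(\<Sum>k\<in>K. b k (y k)) | y.
       (\<forall>k\<in>K. binary (y k)) \<and> (\<forall>j. (\<Sum>k\<in>K. y k j) \<le> x j)}"

definition marginal :: "(('m \<Rightarrow> nat) \<Rightarrow> real) \<Rightarrow> ('m \<Rightarrow> nat) \<Rightarrow> ('m \<Rightarrow> nat) \<Rightarrow> real" where
  "marginal f y x = f (\<lambda>j. y j + x j) - f x"

end

theory Submission
  imports Defs "HOL-Library.FuncSet"
begin


definition binset :: "('m::finite \<Rightarrow> nat) set" where
  "binset = {x. binary x}"

lemma finite_binset: "finite (binset :: ('m::finite \<Rightarrow> nat) set)"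
proof -
  have "binset \<subseteq> PiE (UNIV::'m set) (\<lambda>_. {0,1::nat})"
    by (auto simp: binset_def binary_def PiE_iff extensional_def le_Suc_eq) (metis One_nat_def less_numeral_extra(3))
  then show ?thesis by (rule finite_subset) (simp add: finite_PiE)
qed

lemma welfare_set_finite:
  fixes b :: "nat \<Rightarrow> ('m::finite \<Rightarrow> nat) \<Rightarrow> real"
  assumes "finite K"
  shows "finite {(\<Sum>k\<in>K. b k (y k)) | y.
       (\<forall>k\<in>K. binary (y k)) \<and> (\<forall>j. (\<Sum>k\<in>K. y k j) \<le> x j)}"
proof -
  have "{(\<Sum>k\<in>K. b k (y k)) | y.
       (\<forall>k\<in>K. binary (y k)) \<and> (\<forall>j. (\<Sum>k\<in>K. y k j) \<le> x j)}
     \<subseteq> (\<lambda>y. \<Sum>k\<in>K. b k (y k)) ` PiE K (\<lambda>_. binset)"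
  proof
    fix v assume "v \<in> {(\<Sum>k\<in>K. b k (y k)) | y.
       (\<forall>k\<in>K. binary (y k)) \<and> (\<forall>j. (\<Sum>k\<in>K. y k j) \<le> x j)}"
    then obtain y where v: "v = (\<Sum>k\<in>K. b k (y k))" and y: "\<forall>k\<in>K. binary (y k)" by blast
    have "restrict y K \<in> PiE K (\<lambda>_. binset)" using y by (auto simp: binset_def PiE_iff)
    moreover have "v = (\<Sum>k\<in>K. b k (restrict y K k))" using v by simp
    ultimately show "v \<in> (\<lambda>y. \<Sum>k\<in>K. b k (y k)) ` PiE K (\<lambda>_. binset)" by blast
  qed
  then show ?thesis
    by (rule finite_subset) (intro finite_imageI finite_PiE assms finite_binset)
qed

lemma welfare_ge:
  fixes b :: "nat \<Rightarrow> ('m::finite \<Rightarrow> nat) \<Rightarrow> real"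
  assumes "finite K" "\<forall>k\<in>K. binary (y k)" "\<forall>j. (\<Sum>k\<in>K. y k j) \<le> x j"
  shows "(\<Sum>k\<in>K. b k (y k)) \<le> welfare b K x"
  unfolding welfare_def
  by (rule Max_ge[OF welfare_set_finite[OF assms(1)]]) (use assms in blast)

lemma welfare_attained:
  fixes b :: "nat \<Rightarrow> ('m::finite \<Rightarrow> nat) \<Rightarrow> real"
  assumes "finite K"
  shows "\<exists>y. (\<forall>k\<in>K. binary (y k)) \<and> (\<forall>j. (\<Sum>k\<in>K. y k j) \<le> x j)
            \<and> welfare b K x = (\<Sum>k\<in>K. b k (y k))"
proof -
  let ?A = "{(\<Sum>k\<in>K. b k (y k)) | y.
       (\<forall>k\<in>K. binary (y k)) \<and> (\<forall>j. (\<Sum>k\<in>K. y k j) \<le> x j)}"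
  have ne: "?A \<noteq> {}"
  proof -
    have "(\<Sum>k\<in>K. b k ((\<lambda>_ _. 0) k)) \<in> ?A" by (auto simp: binary_def)
    then show ?thesis by blast
  qed
  have "Max ?A \<in> ?A" by (rule Max_in[OF welfare_set_finite[OF assms] ne])
  then show ?thesis unfolding welfare_def by blast
qed



definition dotp :: "('m::finite \<Rightarrow> real) \<Rightarrow> ('m \<Rightarrow> nat) \<Rightarrow> real" where
  "dotp p z = (\<Sum>j\<in>UNIV. p j * real (z j))"

definition util :: "(('m::finite \<Rightarrow> nat) \<Rightarrow> real) \<Rightarrow> ('m \<Rightarrow> real) \<Rightarrow> ('m \<Rightarrow> nat) \<Rightarrow> real" where
  "util v p z = v z - dotp p z"

definition Uf :: "(('m::finite \<Rightarrow> nat) \<Rightarrow> real) \<Rightarrow> ('m \<Rightarrow> real) \<Rightarrow> real" where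
  "Uf v p = Max (util v p ` binset)"

lemma zero_binset: "(\<lambda>_. 0) \<in> binset" by (simp add: binset_def binary_def)

lemma Uf_ge: "binary z \<Longrightarrow> util v p z \<le> Uf v p"
  unfolding Uf_def by (rule Max_ge[OF finite_imageI[OF finite_binset]]) (auto simp: binset_def)

lemma Uf_attained: "\<exists>z. binary z \<and> Uf v p = util v p z"
proof -
  have "Uf v p \<in> util v p ` binset" unfolding Uf_def
    by (rule Max_in) (use finite_binset zero_binset in auto)
  then show ?thesis by (auto simp: binset_def)
qed

lemma demand_iff: "x \<in> demand v p \<longleftrightarrow> binary x \<and> (\<forall>z. binary z \<longrightarrow> util v p z \<le> util v p x)"
  by (simp add: demand_def util_def dotp_def)

lemma demand_Uf: "x \<in> demand v p \<Longrightarrow> util v p x = Uf v p"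
  using Uf_attained[of v p] Uf_ge[of x v p] by (force simp: demand_iff)

lemma demand_nonempty: "\<exists>x. x \<in> demand v p"
proof -
  obtain z where "binary z" "Uf v p = util v p z" using Uf_attained by blast
  then have "z \<in> demand v p" using Uf_ge[of _ v p] by (simp add: demand_iff)
  then show ?thesis by blast
qed

definition alph :: "(('m::finite \<Rightarrow> nat) \<Rightarrow> real) \<Rightarrow> 'm \<Rightarrow> ('m \<Rightarrow> real) \<Rightarrow> real" where
  "alph v i p = Max (util v (p(i:=0)) ` {z\<in>binset. z i = 1})"

definition bet :: "(('m::finite \<Rightarrow> nat) \<Rightarrow> real) \<Rightarrow> 'm \<Rightarrow> ('m \<Rightarrow> real) \<Rightarrow> real" where
  "bet v i p = Max (util v (p(i:=0)) ` {z\<in>binset. z i = 0})"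

lemma dotp_split: "dotp p z = dotp (p(i:=0)) z + p i * real (z i)"
proof -
  have "dotp p z = p i * real (z i) + (\<Sum>j\<in>UNIV-{i}. p j * real (z j))"
    unfolding dotp_def by (simp add: sum.remove)
  moreover have "dotp (p(i:=0)) z = (\<Sum>j\<in>UNIV-{i}. p j * real (z j))"
  proof -
    have "dotp (p(i:=0)) z = (p(i:=0)) i * real (z i) + (\<Sum>j\<in>UNIV-{i}. (p(i:=0)) j * real (z j))"
      using sum.remove[of UNIV i "\<lambda>j. (p(i:=0)) j * real (z j)"] unfolding dotp_def by simp
    moreover have "(\<Sum>j\<in>UNIV-{i}. (p(i:=0)) j * real (z j)) = (\<Sum>j\<in>UNIV-{i}. p j * real (z j))"
      by (rule sum.cong) auto
    ultimately show ?thesis by simp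
  qed
  ultimately show ?thesis by simp
qed

lemma bin01: "binary z \<Longrightarrow> z i = 0 \<or> z i = 1"
  by (simp add: binary_def) (metis One_nat_def le_SucE le_zero_eq)

lemma binset_split: "binset = {z\<in>binset. z i = 1} \<union> {z\<in>binset. z i = 0}"
  using bin01[of _ i] by (auto simp: binset_def) fastforce

lemma ne1: "{z\<in>(binset::('m::finite\<Rightarrow>nat) set). z i = 1} \<noteq> {}"
proof -
  have "(\<lambda>_. 1) \<in> {z\<in>(binset::('m::finite\<Rightarrow>nat) set). z i = 1}" by (simp add: binset_def binary_def)
  then show ?thesis by blast
qed

lemma ne0: "{z\<in>(binset::('m::finite\<Rightarrow>nat) set). z i = 0} \<noteq> {}"
  using zero_binset by blast

lemma Uf_split:
  fixes v :: "('m::finite \<Rightarrow> nat) \<Rightarrow> real"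
  shows "Uf v p = max (alph v i p - p i) (bet v i p)"
proof -
  have fin1: "finite {z\<in>(binset::('m\<Rightarrow>nat) set). z i = 1}" by (rule finite_subset[OF _ finite_binset]) auto
  have fin0: "finite {z\<in>(binset::('m\<Rightarrow>nat) set). z i = 0}" by (rule finite_subset[OF _ finite_binset]) auto
  have e1: "util v p ` {z\<in>binset. z i = 1} = (\<lambda>x. x - p i) ` (util v (p(i:=0)) ` {z\<in>binset. z i = 1})"
    by (auto simp: image_image util_def dotp_split[of p _ i] intro!: image_cong)
  have e0: "util v p ` {z\<in>binset. z i = 0} = util v (p(i:=0)) ` {z\<in>binset. z i = 0}"
    by (auto simp: util_def dotp_split[of p _ i] intro!: image_cong)
  have "Uf v p = Max (util v p ` {z\<in>binset. z i = 1} \<union> util v p ` {z\<in>binset. z i = 0})"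
    unfolding Uf_def by (subst binset_split[of i]) (simp add: image_Un)
  also have "\<dots> = max (Max (util v p ` {z\<in>binset. z i = 1})) (Max (util v p ` {z\<in>binset. z i = 0}))"
    by (rule Max_Un) (use fin1 fin0 ne1 ne0 in auto)
  also have "Max (util v p ` {z\<in>binset. z i = 1}) = alph v i p - p i"
  proof -
    have "Max ((\<lambda>x. x - p i) ` (util v (p(i:=0)) ` {z\<in>binset. z i = 1}))
        = Max (util v (p(i:=0)) ` {z\<in>binset. z i = 1}) - p i"
      by (rule mono_Max_commute[symmetric]) (use fin1 ne1 in \<open>auto simp: mono_def\<close>)
    then show ?thesis using e1 by (simp add: alph_def)
  qed
  also have "Max (util v p ` {z\<in>binset. z i = 0}) = bet v i p" using e0 by (simp add: bet_def)
  finally show ?thesis .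
qed

lemma alph_upd: "alph v i (p(i:=c)) = alph v i p" by (simp add: alph_def)
lemma bet_upd: "bet v i (p(i:=c)) = bet v i p" by (simp add: bet_def)

lemma alph_ge: "binary z \<Longrightarrow> z i = 1 \<Longrightarrow> util v (p(i:=0)) z \<le> alph v i p"
  unfolding alph_def by (rule Max_ge[OF finite_imageI[OF finite_subset[OF _ finite_binset]]]) (auto simp: binset_def)
lemma bet_ge: "binary z \<Longrightarrow> z i = 0 \<Longrightarrow> util v (p(i:=0)) z \<le> bet v i p"
  unfolding bet_def by (rule Max_ge[OF finite_imageI[OF finite_subset[OF _ finite_binset]]]) (auto simp: binset_def)


lemma threshold_mono:
  fixes v :: "('m::finite \<Rightarrow> nat) \<Rightarrow> real"
  assumes gs: "gross_substitutes v" and pq: "p \<le> q" and eq: "p i = q i"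
  shows "alph v i p - bet v i p \<le> alph v i q - bet v i q"
proof (rule ccontr)
  assume "\<not> ?thesis"
  then have lt: "alph v i q - bet v i q < alph v i p - bet v i p" by simp
  define c where "c = (alph v i q - bet v i q + (alph v i p - bet v i p)) / 2"
  define p' where "p' = p(i:=c)"
  define q' where "q' = q(i:=c)"
  have pq': "p' \<le> q'" using pq by (auto simp: p'_def q'_def le_fun_def)
  obtain x where x: "x \<in> demand v p'" using demand_nonempty by blast
  have xb: "binary x" using x demand_iff by blast
  have "x i = 1"
  proof (rule ccontr)
    assume "x i \<noteq> 1"
    then have "x i = 0" using bin01[OF xb, of i] by simp
    then have "util v p' x \<le> bet v i p'"
      using bet_ge[OF xb, of i v p'] by (simp add: util_def dotp_split[of p' x i])
    moreover have "Uf v p' = max (alph v i p' - c) (bet v i p')" using Uf_split[of v p' i] by (simp add: p'_def)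
    moreover have "alph v i p' = alph v i p" "bet v i p' = bet v i p" by (simp_all add: p'_def alph_upd bet_upd)
    moreover have "alph v i p - c > bet v i p" using lt by (simp add: c_def field_simps)
    ultimately show False using demand_Uf[OF x] by simp
  qed
  moreover have "\<exists>y\<in>demand v q'. \<forall>j\<in>{j. p' j = q' j}. x j \<le> y j"
    using gs pq' x unfolding gross_substitutes_def by blast
  moreover have "p' i = q' i" by (simp add: p'_def q'_def)
  ultimately obtain y where y: "y \<in> demand v q'" and yi: "y i \<ge> 1" by force
  have yb: "binary y" using y demand_iff by blast
  have y1: "y i = 1" using yi bin01[OF yb, of i] by auto
  have d: "dotp q' y = dotp (q'(i:=0)) y + c" using dotp_split[of q' y i] y1 by (simp add: q'_def)
  have "util v q' y \<le> alph v i q' - c"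
    using alph_ge[OF yb y1, of v q'] d by (simp add: util_def)
  moreover have "Uf v q' = max (alph v i q' - c) (bet v i q')" using Uf_split[of v q' i] by (simp add: q'_def)
  moreover have "alph v i q' = alph v i q" "bet v i q' = bet v i q" by (simp_all add: q'_def alph_upd bet_upd)
  moreover have "alph v i q - c < bet v i q" using lt by (simp add: c_def field_simps)
  ultimately show False using demand_Uf[OF y] by simp
qed

lemma single_coord:
  fixes v :: "('m::finite \<Rightarrow> nat) \<Rightarrow> real"
  assumes gs: "gross_substitutes v" and pq: "p \<le> q" and eq: "p i = q i" and s: "s \<ge> 0"
  shows "Uf v (q(i := q i + s)) - Uf v q \<le> Uf v (p(i := p i + s)) - Uf v p"
proof -
  have th: "alph v i p - bet v i p \<le> alph v i q - bet v i q" by (rule threshold_mono[OF gs pq eq])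
  have "Uf v (q(i := q i + s)) = max (alph v i q - (q i + s)) (bet v i q)"
    using Uf_split[of v "q(i := q i + s)" i] by (simp add: alph_upd bet_upd)
  moreover have "Uf v (p(i := p i + s)) = max (alph v i p - (p i + s)) (bet v i p)"
    using Uf_split[of v "p(i := p i + s)" i] by (simp add: alph_upd bet_upd)
  moreover note Uf_split[of v q i] Uf_split[of v p i]
  ultimately show ?thesis using th s eq by (simp add: max_def)
qed



lemma Uf_multi:
  fixes v :: "('m::finite \<Rightarrow> nat) \<Rightarrow> real"
  assumes gs: "gross_substitutes v" and fin: "finite A"
  shows "\<forall>a p q. (\<forall>j. a j \<ge> 0) \<longrightarrow> (\<forall>j. j \<notin> A \<longrightarrow> a j = 0) \<longrightarrow> (\<forall>j\<in>A. p j = q j) \<longrightarrow> p \<le> q \<longrightarrow>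
     Uf v (\<lambda>j. q j + a j) - Uf v q \<le> Uf v (\<lambda>j. p j + a j) - Uf v p"
  using fin
proof (induction A rule: finite_induct)
  case empty
  show ?case
  proof (intro allI impI)
    fix a p q :: "'m \<Rightarrow> real"
    assume "\<forall>j. j \<notin> {} \<longrightarrow> a j = 0"
    then have "(\<lambda>j. q j + a j) = q" "(\<lambda>j. p j + a j) = p" by auto
    then show "Uf v (\<lambda>j. q j + a j) - Uf v q \<le> Uf v (\<lambda>j. p j + a j) - Uf v p" by simp
  qed
next
  case (insert i A)
  show ?case
  proof (intro allI impI)
    fix a p q :: "'m \<Rightarrow> real"
    assume a0: "\<forall>j. a j \<ge> 0" and aA: "\<forall>j. j \<notin> insert i A \<longrightarrow> a j = 0"
      and eq: "\<forall>j\<in>insert i A. p j = q j" and pq: "p \<le> q"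
    define a' where "a' = a(i:=0)"
    have IH: "Uf v (\<lambda>j. q j + a' j) - Uf v q \<le> Uf v (\<lambda>j. p j + a' j) - Uf v p"
      using insert.IH a0 aA eq pq by (auto simp: a'_def)
    define P where "P = (\<lambda>j. p j + a' j)"
    define Q where "Q = (\<lambda>j. q j + a' j)"
    have PQ: "P \<le> Q" using pq by (auto simp: P_def Q_def le_fun_def)
    have PQi: "P i = Q i" using eq by (simp add: P_def Q_def a'_def)
    have sc: "Uf v (Q(i := Q i + a i)) - Uf v Q \<le> Uf v (P(i := P i + a i)) - Uf v P"
      by (rule single_coord[OF gs PQ PQi]) (use a0 in auto)
    have "Q(i := Q i + a i) = (\<lambda>j. q j + a j)" by (auto simp: Q_def a'_def)
    moreover have "P(i := P i + a i) = (\<lambda>j. p j + a j)" by (auto simp: P_def a'_def)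
    ultimately show "Uf v (\<lambda>j. q j + a j) - Uf v q \<le> Uf v (\<lambda>j. p j + a j) - Uf v p"
      using sc IH by (simp add: P_def Q_def)
  qed
qed

lemma Uf_submod:
  fixes v :: "('m::finite \<Rightarrow> nat) \<Rightarrow> real"
  assumes gs: "gross_substitutes v"
  shows "Uf v (\<lambda>j. min (p j) (q j)) + Uf v (\<lambda>j. max (p j) (q j)) \<le> Uf v p + Uf v q"
proof -
  define r where "r = (\<lambda>j. min (p j) (q j))"
  define a where "a = (\<lambda>j. max (p j - q j) 0)"
  define A0 where "A0 = {j. p j > q j}"
  have H: "\<forall>a p q. (\<forall>j. a j \<ge> 0) \<longrightarrow> (\<forall>j. j \<notin> A0 \<longrightarrow> a j = 0) \<longrightarrow> (\<forall>j\<in>A0. p j = q j) \<longrightarrow> p \<le> q \<longrightarrow>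
     Uf v (\<lambda>j. q j + a j) - Uf v q \<le> Uf v (\<lambda>j. p j + a j) - Uf v p"
    by (rule Uf_multi[OF gs]) simp
  have "Uf v (\<lambda>j. q j + a j) - Uf v q \<le> Uf v (\<lambda>j. r j + a j) - Uf v r"
    by (rule H[rule_format]) (auto simp: a_def r_def le_fun_def A0_def)
  moreover have "(\<lambda>j. q j + a j) = (\<lambda>j. max (p j) (q j))" by (auto simp: a_def max_def)
  moreover have "(\<lambda>j. r j + a j) = p" by (auto simp: a_def r_def max_def min_def)
  ultimately show ?thesis by (simp add: r_def)
qed



lemma dotp_upd_same: "dotp (p(j:=0)) (x(j:=c)) = dotp (p(j:=0)) x"
  unfolding dotp_def by (rule sum.cong) auto

lemma not_expensive:
  fixes v :: "('m::finite \<Rightarrow> nat) \<Rightarrow> real"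
  assumes val: "valuation v" and bnd: "\<forall>z. binary z \<longrightarrow> v z \<le> V"
    and x: "x \<in> demand v \<pi>" and big: "\<pi> j > V"
  shows "x j = 0"
proof (rule ccontr)
  assume "x j \<noteq> 0"
  have xb: "binary x" using x demand_iff by blast
  then have x1: "x j = 1" using bin01[OF xb, of j] \<open>x j \<noteq> 0\<close> by simp
  define z where "z = x(j:=0)"
  have zb: "binary z" using xb by (simp add: z_def binary_def)
  have "dotp \<pi> x = dotp (\<pi>(j:=0)) x + \<pi> j" using dotp_split[of \<pi> x j] x1 by simp
  moreover have "dotp \<pi> z = dotp (\<pi>(j:=0)) x" using dotp_split[of \<pi> z j] dotp_upd_same[of \<pi> j x 0]
    by (simp add: z_def)
  moreover have "v z \<ge> 0" using val zb by (simp add: valuation_def)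
  moreover have "v x \<le> V" using bnd xb by simp
  moreover have "util v \<pi> z \<le> util v \<pi> x" using x zb by (simp add: demand_iff)
  ultimately show False using big by (simp add: util_def)
qed

definition Ov :: "('m \<Rightarrow> nat option) \<Rightarrow> nat \<Rightarrow> 'm \<Rightarrow> nat" where
  "Ov own k = (\<lambda>j. if own j = Some k then 1 else 0)"

definition pers :: "real \<Rightarrow> ('m \<Rightarrow> real) \<Rightarrow> ('m \<Rightarrow> nat option) \<Rightarrow> nat \<Rightarrow> 'm \<Rightarrow> real" where
  "pers e p own k = (\<lambda>j. if own j = Some k then p j else p j + e)"

definition pz :: "('m \<Rightarrow> nat) \<Rightarrow> real \<Rightarrow> 'm \<Rightarrow> real" where
  "pz s V = (\<lambda>j. if s j = 1 then 0 else V)"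

definition Inv :: "(nat \<Rightarrow> ('m::finite \<Rightarrow> nat) \<Rightarrow> real) \<Rightarrow> nat set \<Rightarrow> ('m \<Rightarrow> nat) \<Rightarrow> real \<Rightarrow> real
   \<Rightarrow> ('m \<Rightarrow> real) \<Rightarrow> ('m \<Rightarrow> nat option) \<Rightarrow> bool" where
  "Inv b K s V e p own \<longleftrightarrow>
    (\<forall>j k. own j = Some k \<longrightarrow> k \<in> K \<and> s j = 1) \<and>
    (\<forall>j. own j = None \<longrightarrow> p j = pz s V j) \<and>
    (\<forall>j. 0 \<le> p j \<and> p j \<le> V) \<and>
    (\<forall>k\<in>K. \<exists>D\<in>demand (b k) (pers e p own k). \<forall>j. Ov own k j \<le> D j)"

definition Term :: "(nat \<Rightarrow> ('m::finite \<Rightarrow> nat) \<Rightarrow> real) \<Rightarrow> nat set \<Rightarrow> real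
   \<Rightarrow> ('m \<Rightarrow> real) \<Rightarrow> ('m \<Rightarrow> nat option) \<Rightarrow> bool" where
  "Term b K e p own \<longleftrightarrow> (\<forall>k\<in>K. Ov own k \<in> demand (b k) (pers e p own k))"

lemma auction_step:
  fixes b :: "nat \<Rightarrow> ('m::finite \<Rightarrow> nat) \<Rightarrow> real"
  assumes val: "\<forall>k\<in>K. valuation (b k)" and gs: "\<forall>k\<in>K. gross_substitutes (b k)"
    and bnd: "\<forall>k\<in>K. \<forall>z. binary z \<longrightarrow> b k z \<le> V"
    and e: "e > 0"
    and inv: "Inv b K s V e p own" and nt: "\<not> Term b K e p own"
  shows "\<exists>p' own'. Inv b K s V e p' own' \<and> sum p UNIV + e \<le> sum p' UNIV"
proof -
  obtain k where kK: "k \<in> K" and nd: "Ov own k \<notin> demand (b k) (pers e p own k)"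
    using nt by (auto simp: Term_def)
  define \<pi> where "\<pi> = pers e p own k"
  obtain D where D: "D \<in> demand (b k) \<pi>" and OD: "\<forall>j. Ov own k j \<le> D j"
    using inv kK by (auto simp: Inv_def \<pi>_def)
  have Db: "binary D" using D demand_iff by blast
  have F1: "\<pi> j \<le> V" if "D j = 1" for j
    using not_expensive[of "b k" V D \<pi> j] val bnd kK D that by force
  have F2: "D j = 1" if "own j = Some k" for j
    using OD[rule_format, of j] that bin01[OF Db, of j] by (auto simp: Ov_def)
  define own' where "own' = (\<lambda>j. if D j = 1 then Some k else own j)"
  define p' where "p' = (\<lambda>j. if D j = 1 \<and> own j \<noteq> Some k then p j + e else p j)"
  have I1: "\<forall>j k'. own' j = Some k' \<longrightarrow> k' \<in> K \<and> s j = 1"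
  proof (intro allI impI)
    fix j k' assume o: "own' j = Some k'"
    show "k' \<in> K \<and> s j = 1"
    proof (cases "D j = 1")
      case True
      then have "k' = k" using o by (simp add: own'_def)
      moreover have "s j = 1"
      proof (rule ccontr)
        assume ns: "s j \<noteq> 1"
        have "own j = None"
        proof (cases "own j")
          case (Some l) then show ?thesis using inv ns by (auto simp: Inv_def)
        qed simp
        then have "p j = V" using inv ns by (auto simp: Inv_def pz_def)
        then have "\<pi> j = V + e" using \<open>own j = None\<close> by (simp add: \<pi>_def pers_def)
        then show False using F1[OF True] e by simp
      qed
      ultimately show ?thesis using kK by simp
    next
      case False
      then show ?thesis using o inv by (auto simp: own'_def Inv_def)
    qed
  qed
  have I2: "\<forall>j. own' j = None \<longrightarrow> p' j = pz s V j"
    using inv by (auto simp: own'_def p'_def Inv_def split: if_splits)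
  have I3: "\<forall>j. 0 \<le> p' j \<and> p' j \<le> V"
  proof
    fix j
    show "0 \<le> p' j \<and> p' j \<le> V"
    proof (cases "D j = 1 \<and> own j \<noteq> Some k")
      case True
      then have "p' j = \<pi> j" by (simp add: p'_def \<pi>_def pers_def)
      moreover have "0 \<le> p j" using inv by (simp add: Inv_def)
      moreover have "p' j = p j + e" using True by (simp add: p'_def)
      ultimately show ?thesis using F1[of j] True e by linarith
    next
      case False
      then show ?thesis using inv by (auto simp: Inv_def p'_def)
    qed
  qed
  have persk: "pers e p' own' k = \<pi>"
  proof
    fix j show "pers e p' own' k j = \<pi> j"
      using F2[of j] by (auto simp: pers_def own'_def p'_def \<pi>_def)
  qed
  have Ovk: "Ov own' k = D"
  proof
    fix j show "Ov own' k j = D j"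
      using F2[of j] bin01[OF Db, of j] by (auto simp: Ov_def own'_def)
  qed
  have I4: "\<forall>l\<in>K. \<exists>D'\<in>demand (b l) (pers e p' own' l). \<forall>j. Ov own' l j \<le> D' j"
  proof
    fix l assume lK: "l \<in> K"
    show "\<exists>D'\<in>demand (b l) (pers e p' own' l). \<forall>j. Ov own' l j \<le> D' j"
    proof (cases "l = k")
      case True
      then show ?thesis using D persk Ovk by auto
    next
      case False
      obtain Dl where Dl: "Dl \<in> demand (b l) (pers e p own l)" and ODl: "\<forall>j. Ov own l j \<le> Dl j"
        using inv lK by (auto simp: Inv_def)
      have le: "pers e p own l \<le> pers e p' own' l"
      proof (rule le_funI)
        fix j show "pers e p own l j \<le> pers e p' own' l j"
          using False e by (auto simp: pers_def own'_def p'_def)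
      qed
      obtain D' where D': "D' \<in> demand (b l) (pers e p' own' l)"
        and D'ge: "\<forall>j\<in>{j. pers e p own l j = pers e p' own' l j}. Dl j \<le> D' j"
        using gs lK le Dl unfolding gross_substitutes_def by blast
      have "\<forall>j. Ov own' l j \<le> D' j"
      proof
        fix j show "Ov own' l j \<le> D' j"
        proof (cases "own' j = Some l")
          case True
          then have "D j \<noteq> 1" "own j = Some l" using False by (auto simp: own'_def split: if_splits)
          then have "pers e p own l j = pers e p' own' l j" by (simp add: pers_def own'_def p'_def)
          then have "Dl j \<le> D' j" using D'ge by auto
          moreover have "Ov own l j = 1" using \<open>own j = Some l\<close> by (simp add: Ov_def)
          ultimately show ?thesis using ODl[rule_format, of j] True by (simp add: Ov_def)
        next
          case False
          then show ?thesis by (simp add: Ov_def)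
        qed
      qed
      then show ?thesis using D' by blast
    qed
  qed
  have inv': "Inv b K s V e p' own'" using I1 I2 I3 I4 by (simp add: Inv_def)
  obtain j0 where j0: "D j0 = 1" "own j0 \<noteq> Some k"
  proof (rule ccontr)
    assume "\<not> thesis"
    then have h: "\<forall>j. D j = 1 \<longrightarrow> own j = Some k" using that by blast
    have "Ov own k = D"
    proof
      fix j show "Ov own k j = D j"
        using h[rule_format, of j] F2[of j] bin01[OF Db, of j] by (auto simp: Ov_def)
    qed
    then show False using nd D by (simp add: \<pi>_def)
  qed
  have "sum p' UNIV - sum p UNIV = (\<Sum>j\<in>UNIV. p' j - p j)" by (simp add: sum_subtractf)
  also have "\<dots> \<ge> p' j0 - p j0"
    by (rule member_le_sum) (auto simp: p'_def e less_imp_le)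
  finally have "sum p' UNIV - sum p UNIV \<ge> e" using j0 by (simp add: p'_def)
  then show ?thesis using inv' by (intro exI[of _ p'] exI[of _ own']) simp
qed



lemma val_nonneg: "valuation v \<Longrightarrow> binary x \<Longrightarrow> v x \<ge> 0"
  unfolding valuation_def by blast
lemma val_mono: "valuation v \<Longrightarrow> binary x \<Longrightarrow> binary y \<Longrightarrow> x \<le> y \<Longrightarrow> v x \<le> v y"
  unfolding valuation_def by blast

lemma auction_exists:
  fixes b :: "nat \<Rightarrow> ('m::finite \<Rightarrow> nat) \<Rightarrow> real"
  assumes val: "\<forall>k\<in>K. valuation (b k)" and gs: "\<forall>k\<in>K. gross_substitutes (b k)"
    and bnd: "\<forall>k\<in>K. \<forall>z. binary z \<longrightarrow> b k z \<le> V"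
    and e: "e > 0"
  shows "\<forall>p own. Inv b K s V e p own \<and> real (card (UNIV::'m set)) * V - sum p UNIV \<le> real N * e
          \<longrightarrow> (\<exists>p' own'. Inv b K s V e p' own' \<and> Term b K e p' own')"
proof (induction N)
  case 0
  show ?case
  proof (intro allI impI)
    fix p own assume H: "Inv b K s V e p own \<and> real (card (UNIV::'m set)) * V - sum p UNIV \<le> real 0 * e"
    show "\<exists>p' own'. Inv b K s V e p' own' \<and> Term b K e p' own'"
    proof (cases "Term b K e p own")
      case True then show ?thesis using H by blast
    next
      case False
      then obtain p' own' where "Inv b K s V e p' own'" "sum p UNIV + e \<le> sum p' UNIV"
        using auction_step[OF val gs bnd e] H by blast
      moreover have "sum p' UNIV \<le> real (card (UNIV::'m set)) * V"
      proof -
        have "sum p' UNIV \<le> (\<Sum>j\<in>(UNIV::'m set). V)"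
          by (rule sum_mono) (use \<open>Inv b K s V e p' own'\<close> in \<open>simp add: Inv_def\<close>)
        then show ?thesis by simp
      qed
      ultimately show ?thesis using H e by simp
    qed
  qed
next
  case (Suc N)
  show ?case
  proof (intro allI impI)
    fix p own assume H: "Inv b K s V e p own \<and> real (card (UNIV::'m set)) * V - sum p UNIV \<le> real (Suc N) * e"
    show "\<exists>p' own'. Inv b K s V e p' own' \<and> Term b K e p' own'"
    proof (cases "Term b K e p own")
      case True then show ?thesis using H by blast
    next
      case False
      then obtain p' own' where I: "Inv b K s V e p' own'" and S: "sum p UNIV + e \<le> sum p' UNIV"
        using auction_step[OF val gs bnd e] H by blast
      have "real (card (UNIV::'m set)) * V - sum p' UNIV \<le> real N * e"
        using H S by (simp add: algebra_simps)
      then show ?thesis using Suc.IH I by blast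
    qed
  qed
qed

lemma Ov_sum:
  assumes fin: "finite K" and I1: "\<forall>j k. own j = Some k \<longrightarrow> k \<in> K \<and> s j = 1"
  shows "(\<Sum>k\<in>K. Ov own k j) = (if own j = None then 0 else 1)"
proof (cases "own j")
  case None then show ?thesis by (simp add: Ov_def)
next
  case (Some k0)
  then have "(\<Sum>k\<in>K. Ov own k j) = (\<Sum>k\<in>K. if k0 = k then 1 else 0)"
    by (intro sum.cong) (auto simp: Ov_def)
  also have "\<dots> = 1" using Some I1 fin by (simp add: sum.delta)
  finally show ?thesis using Some by simp
qed

lemma eps_duality:
  fixes b :: "nat \<Rightarrow> ('m::finite \<Rightarrow> nat) \<Rightarrow> real"
  assumes val: "\<forall>k\<in>K. valuation (b k)" and gs: "\<forall>k\<in>K. gross_substitutes (b k)"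
    and fin: "finite K" and s: "binary s" and e: "e > 0"
  shows "\<exists>p. (\<forall>j. p j \<ge> 0) \<and>
     (\<Sum>k\<in>K. Uf (b k) p) + dotp p s \<le> welfare b K s + real (card K) * real (card (UNIV::'m set)) * e"
proof -
  define V where "V = (\<Sum>k\<in>K. b k one_vec)"
  have ob: "binary (one_vec::'m \<Rightarrow> nat)" by (simp add: binary_def one_vec_def)
  have bnd: "\<forall>k\<in>K. \<forall>z. binary z \<longrightarrow> b k z \<le> V"
  proof (intro ballI allI impI)
    fix k and z :: "'m \<Rightarrow> nat" assume kK: "k \<in> K" and zb: "binary z"
    have "z \<le> one_vec" using zb by (simp add: le_fun_def one_vec_def binary_def)
    then have "b k z \<le> b k one_vec"
      using val kK zb ob val_mono by blast
    also have "\<dots> \<le> V" unfolding V_def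
      by (rule member_le_sum) (use val kK ob fin val_nonneg in auto)
    finally show "b k z \<le> V" .
  qed
  have V0: "V \<ge> 0" unfolding V_def by (rule sum_nonneg) (use val ob val_nonneg in auto)
  define own0 where "own0 = (\<lambda>j::'m. None::nat option)"
  have inv0: "Inv b K s V e (pz s V) own0"
    unfolding Inv_def
  proof (intro conjI allI ballI)
    fix k assume "k \<in> K"
    obtain D where "D \<in> demand (b k) (pers e (pz s V) own0 k)" using demand_nonempty by blast
    then show "\<exists>D\<in>demand (b k) (pers e (pz s V) own0 k). \<forall>j. Ov own0 k j \<le> D j"
      by (auto simp: Ov_def own0_def)
  qed (auto simp: own0_def pz_def V0)
  obtain N :: nat where N: "real (card (UNIV::'m set)) * V / e \<le> real N" using real_arch_simple by blast
  have "real (card (UNIV::'m set)) * V - sum (pz s V) UNIV \<le> real N * e"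
  proof -
    have "sum (pz s V) UNIV \<ge> 0" by (rule sum_nonneg) (simp add: pz_def V0)
    moreover have "real (card (UNIV::'m set)) * V \<le> real N * e" using N e by (simp add: field_simps)
    ultimately show ?thesis by simp
  qed
  then obtain p own where inv: "Inv b K s V e p own" and trm: "Term b K e p own"
    using auction_exists[OF val gs bnd e, of s N] inv0 by blast
  have I1: "\<forall>j k. own j = Some k \<longrightarrow> k \<in> K \<and> s j = 1" using inv by (simp add: Inv_def)
  have p0: "\<forall>j. p j \<ge> 0" using inv by (simp add: Inv_def)
  have Ubnd: "Uf (b k) p \<le> b k (Ov own k) - dotp p (Ov own k) + e * real (card (UNIV::'m set))" if kK: "k \<in> K" for k
  proof -
    define \<pi> where "\<pi> = pers e p own k"
    have O: "Ov own k \<in> demand (b k) \<pi>" using trm kK by (simp add: Term_def \<pi>_def)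
    obtain z where zb: "binary z" and zU: "Uf (b k) p = util (b k) p z" using Uf_attained by blast
    have "util (b k) \<pi> z \<le> util (b k) \<pi> (Ov own k)" using O zb by (simp add: demand_iff)
    moreover have "dotp \<pi> z \<le> dotp p z + e * real (card (UNIV::'m set))"
    proof -
      have "dotp \<pi> z - dotp p z = (\<Sum>j\<in>UNIV. (\<pi> j - p j) * real (z j))"
        by (simp add: dotp_def sum_subtractf left_diff_distrib)
      also have "\<dots> \<le> (\<Sum>j\<in>(UNIV::'m set). e)"
      proof (rule sum_mono)
        fix j
        have "z j \<le> 1" using zb by (simp add: binary_def)
        moreover have "0 \<le> \<pi> j - p j" "\<pi> j - p j \<le> e" using e by (auto simp: \<pi>_def pers_def)
        ultimately show "(\<pi> j - p j) * real (z j) \<le> e"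
          using bin01[OF zb, of j] by auto
      qed
      finally show ?thesis by (simp add: mult.commute)
    qed
    moreover have "dotp \<pi> (Ov own k) = dotp p (Ov own k)"
      unfolding dotp_def by (rule sum.cong) (auto simp: \<pi>_def pers_def Ov_def)
    ultimately show ?thesis using zU by (simp add: util_def)
  qed
  have "(\<Sum>k\<in>K. Uf (b k) p) \<le> (\<Sum>k\<in>K. b k (Ov own k) - dotp p (Ov own k) + e * real (card (UNIV::'m set)))"
    by (rule sum_mono) (rule Ubnd)
  also have "\<dots> = (\<Sum>k\<in>K. b k (Ov own k)) - (\<Sum>k\<in>K. dotp p (Ov own k)) + real (card K) * real (card (UNIV::'m set)) * e"
    by (simp add: sum.distrib sum_subtractf)
  also have "(\<Sum>k\<in>K. dotp p (Ov own k)) = dotp p s"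
  proof -
    have "(\<Sum>k\<in>K. dotp p (Ov own k)) = (\<Sum>j\<in>UNIV. \<Sum>k\<in>K. p j * real (Ov own k j))"
      unfolding dotp_def by (rule sum.swap)
    also have "\<dots> = (\<Sum>j\<in>UNIV. p j * real (s j))"
    proof (rule sum.cong)
      fix j :: 'm
      have "(\<Sum>k\<in>K. p j * real (Ov own k j)) = p j * real (\<Sum>k\<in>K. Ov own k j)"
        by (simp add: sum_distrib_left)
      also have "\<dots> = p j * real (s j)"
        using Ov_sum[OF fin I1, of j] I1 inv bin01[OF s, of j]
        by (cases "own j") (auto simp: Inv_def pz_def)
      finally show "(\<Sum>k\<in>K. p j * real (Ov own k j)) = p j * real (s j)" .
    qed simp
    finally show ?thesis by (simp add: dotp_def)
  qed
  also have "(\<Sum>k\<in>K. b k (Ov own k)) \<le> welfare b K s"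
  proof (rule welfare_ge[OF fin])
    show "\<forall>k\<in>K. binary (Ov own k)" by (simp add: Ov_def binary_def)
    show "\<forall>j. (\<Sum>k\<in>K. Ov own k j) \<le> s j"
      using Ov_sum[OF fin I1] I1 by (auto split: option.splits)
  qed
  finally show ?thesis using p0 by (intro exI[of _ p]) simp
qed

lemma weak_duality:
  fixes b :: "nat \<Rightarrow> ('m::finite \<Rightarrow> nat) \<Rightarrow> real"
  assumes fin: "finite K" and p0: "\<forall>j. p j \<ge> 0"
  shows "welfare b K s \<le> (\<Sum>k\<in>K. Uf (b k) p) + dotp p s"
proof -
  obtain y where yb: "\<forall>k\<in>K. binary (y k)" and yf: "\<forall>j. (\<Sum>k\<in>K. y k j) \<le> s j"
    and yW: "welfare b K s = (\<Sum>k\<in>K. b k (y k))"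
    using welfare_attained[OF fin, where b=b and x=s] by blast
  have "(\<Sum>k\<in>K. b k (y k)) = (\<Sum>k\<in>K. util (b k) p (y k)) + (\<Sum>k\<in>K. dotp p (y k))"
    by (simp add: util_def sum_subtractf)
  also have "(\<Sum>k\<in>K. util (b k) p (y k)) \<le> (\<Sum>k\<in>K. Uf (b k) p)"
    by (rule sum_mono) (use yb Uf_ge in auto)
  also have "(\<Sum>k\<in>K. dotp p (y k)) \<le> dotp p s"
  proof -
    have "(\<Sum>k\<in>K. dotp p (y k)) = (\<Sum>j\<in>UNIV. \<Sum>k\<in>K. p j * real (y k j))"
      unfolding dotp_def by (rule sum.swap)
    also have "\<dots> \<le> (\<Sum>j\<in>UNIV. p j * real (s j))"
    proof (rule sum_mono)
      fix j :: 'm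
      have "(\<Sum>k\<in>K. p j * real (y k j)) = p j * real (\<Sum>k\<in>K. y k j)"
        by (simp add: sum_distrib_left)
      also have "\<dots> \<le> p j * real (s j)"
      proof (rule mult_left_mono)
        show "real (\<Sum>k\<in>K. y k j) \<le> real (s j)" using yf[rule_format, of j] by (simp only: of_nat_le_iff)
      qed (use p0 in auto)
      finally show "(\<Sum>k\<in>K. p j * real (y k j)) \<le> p j * real (s j)" .
    qed
    finally show ?thesis by (simp add: dotp_def)
  qed
  finally show ?thesis using yW by simp
qed



lemma dot_comb:
  fixes p q :: "'m::finite \<Rightarrow> real"
  assumes p0: "\<forall>j. p j \<ge> 0" and q0: "\<forall>j. q j \<ge> 0" and s: "binary s" and t: "binary t"
  shows "dotp (\<lambda>j. min (p j) (q j)) (\<lambda>j. max (s j) (t j)) + dotp (\<lambda>j. max (p j) (q j)) (\<lambda>j. min (s j) (t j))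
         \<le> dotp p s + dotp q t"
proof -
  have "dotp (\<lambda>j. min (p j) (q j)) (\<lambda>j. max (s j) (t j)) + dotp (\<lambda>j. max (p j) (q j)) (\<lambda>j. min (s j) (t j))
      = (\<Sum>j\<in>UNIV. min (p j) (q j) * real (max (s j) (t j)) + max (p j) (q j) * real (min (s j) (t j)))"
    by (simp add: dotp_def sum.distrib)
  also have "\<dots> \<le> (\<Sum>j\<in>UNIV. p j * real (s j) + q j * real (t j))"
  proof (rule sum_mono)
    fix j
    show "min (p j) (q j) * real (max (s j) (t j)) + max (p j) (q j) * real (min (s j) (t j))
          \<le> p j * real (s j) + q j * real (t j)"
      using bin01[OF s, of j] bin01[OF t, of j] p0[rule_format, of j] q0[rule_format, of j]
      by (elim disjE) (simp_all add: min_def max_def)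
  qed
  also have "\<dots> = dotp p s + dotp q t" by (simp add: dotp_def sum.distrib)
  finally show ?thesis .
qed

lemma welfare_submod_K:
  fixes b :: "nat \<Rightarrow> ('m::finite \<Rightarrow> nat) \<Rightarrow> real"
  assumes val: "\<forall>k\<in>K. valuation (b k)" and gs: "\<forall>k\<in>K. gross_substitutes (b k)"
    and fin: "finite K" and s: "binary s" and t: "binary t"
  shows "welfare b K (\<lambda>j. max (s j) (t j)) + welfare b K (\<lambda>j. min (s j) (t j))
         \<le> welfare b K s + welfare b K t"
proof (rule field_le_epsilon)
  fix d :: real assume d: "0 < d"
  define c where "c = real (card K) * real (card (UNIV::'m set))"
  have c0: "c \<ge> 0" by (simp add: c_def)
  define e where "e = d / (2 * c + 1)"
  have e: "e > 0" using d c0 by (simp add: e_def)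
  have ce: "2 * c * e \<le> d"
  proof -
    have "2 * c * e = d * (2 * c / (2 * c + 1))" using c0 by (simp add: e_def field_simps)
    also have "\<dots> \<le> d * 1" using c0 d by (intro mult_left_mono) (simp_all add: divide_le_eq_1)
    finally show ?thesis by simp
  qed
  obtain p where p0: "\<forall>j. p j \<ge> 0" and pS: "(\<Sum>k\<in>K. Uf (b k) p) + dotp p s \<le> welfare b K s + c * e"
    using eps_duality[OF val gs fin s e] by (auto simp: c_def)
  obtain q where q0: "\<forall>j. q j \<ge> 0" and qS: "(\<Sum>k\<in>K. Uf (b k) q) + dotp q t \<le> welfare b K t + c * e"
    using eps_duality[OF val gs fin t e] by (auto simp: c_def)
  define r where "r = (\<lambda>j. min (p j) (q j))"
  define w where "w = (\<lambda>j. max (p j) (q j))"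
  have r0: "\<forall>j. r j \<ge> 0" using p0 q0 by (simp add: r_def)
  have w0: "\<forall>j. w j \<ge> 0" using p0 q0 by (simp add: w_def max_def)
  have W1: "welfare b K (\<lambda>j. max (s j) (t j)) \<le> (\<Sum>k\<in>K. Uf (b k) r) + dotp r (\<lambda>j. max (s j) (t j))"
    by (rule weak_duality[OF fin r0])
  have W2: "welfare b K (\<lambda>j. min (s j) (t j)) \<le> (\<Sum>k\<in>K. Uf (b k) w) + dotp w (\<lambda>j. min (s j) (t j))"
    by (rule weak_duality[OF fin w0])
  have U: "(\<Sum>k\<in>K. Uf (b k) r) + (\<Sum>k\<in>K. Uf (b k) w) \<le> (\<Sum>k\<in>K. Uf (b k) p) + (\<Sum>k\<in>K. Uf (b k) q)"
  proof -
    have "(\<Sum>k\<in>K. Uf (b k) r + Uf (b k) w) \<le> (\<Sum>k\<in>K. Uf (b k) p + Uf (b k) q)"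
      by (rule sum_mono) (use gs Uf_submod in \<open>auto simp: r_def w_def\<close>)
    then show ?thesis by (simp add: sum.distrib)
  qed
  have D: "dotp r (\<lambda>j. max (s j) (t j)) + dotp w (\<lambda>j. min (s j) (t j)) \<le> dotp p s + dotp q t"
    unfolding r_def w_def by (rule dot_comb[OF p0 q0 s t])
  show "welfare b K (\<lambda>j. max (s j) (t j)) + welfare b K (\<lambda>j. min (s j) (t j))
         \<le> welfare b K s + welfare b K t + d"
    using W1 W2 U D pS qS ce by linarith
qed

lemma welfare_submod:
  fixes b :: "nat \<Rightarrow> ('m::finite \<Rightarrow> nat) \<Rightarrow> real"
  assumes val: "\<forall>i<n. valuation (b i)"
    and gs: "\<forall>i<n. gross_substitutes (b i)"
    and K: "K \<subseteq> {..<n}" and s: "binary s" and t: "binary t"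
  shows "welfare b K (\<lambda>j. max (s j) (t j)) + welfare b K (\<lambda>j. min (s j) (t j))
         \<le> welfare b K s + welfare b K t"
proof -
  have "finite K" using K finite_subset by blast
  moreover have "\<forall>k\<in>K. valuation (b k)" "\<forall>k\<in>K. gross_substitutes (b k)" using K val gs by auto
  ultimately show ?thesis using welfare_submod_K s t by blast
qed


lemma step_b:
  fixes b :: "nat \<Rightarrow> ('m::finite \<Rightarrow> nat) \<Rightarrow> real"
  assumes val: "\<forall>i<n. valuation (b i)"
    and gs: "\<forall>i<n. gross_substitutes (b i)"
    and i: "i < n" and c: "binary c"
  shows "welfare b ({..<n}-{i}) one_vec - welfare b ({..<n}-{i}) c
         \<le> welfare b {..<n} one_vec - welfare b {..<n} c"
proof -
  let ?K = "{..<n}::nat set" and ?K' = "{..<n}-{i}"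
  obtain y where yb: "\<forall>k\<in>?K. binary (y k)" and yf: "\<forall>j. (\<Sum>k\<in>?K. y k j) \<le> c j"
    and yW: "welfare b ?K c = (\<Sum>k\<in>?K. b k (y k))"
    using welfare_attained[where K="?K" and b=b and x=c] by auto
  define z where "z = y i"
  have split: "\<And>f::nat \<Rightarrow> 'a::comm_monoid_add. (\<Sum>k\<in>?K. f k) = f i + (\<Sum>k\<in>?K'. f k)"
    using i by (simp add: sum.remove)
  have zb: "binary z" using yb i z_def by auto
  have zc: "\<forall>j. z j \<le> c j" proof
    fix j have "y i j + (\<Sum>k\<in>?K'. y k j) \<le> c j" using yf[rule_format, of j] split[of "\<lambda>k. y k j"] by linarith
    then show "z j \<le> c j" unfolding z_def by simp
  qed
  have zb1: "\<forall>j. z j \<le> 1" using zb by (simp add: binary_def)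
  have c1: "\<forall>j. c j \<le> 1" using c by (simp add: binary_def)
  have "(\<Sum>k\<in>?K'. b k (y k)) \<le> welfare b ?K' (\<lambda>j. c j - z j)"
  proof (rule welfare_ge)
    show "finite ?K'" by simp
    show "\<forall>k\<in>?K'. binary (y k)" using yb by auto
    show "\<forall>j. (\<Sum>k\<in>?K'. y k j) \<le> c j - z j"
    proof
      fix j have "y i j + (\<Sum>k\<in>?K'. y k j) \<le> c j" using yf[rule_format, of j] split[of "\<lambda>k. y k j"] by linarith
      then show "(\<Sum>k\<in>?K'. y k j) \<le> c j - z j" unfolding z_def by simp
    qed
  qed
  then have Wc: "welfare b ?K c \<le> b i z + welfare b ?K' (\<lambda>j. c j - z j)"
    using yW split[of "\<lambda>k. b k (y k)"] z_def by simp
  obtain y' where y'b: "\<forall>k\<in>?K'. binary (y' k)" and y'f: "\<forall>j. (\<Sum>k\<in>?K'. y' k j) \<le> one_vec j - z j"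
    and y'W: "welfare b ?K' (\<lambda>j. one_vec j - z j) = (\<Sum>k\<in>?K'. b k (y' k))"
    using welfare_attained[where K="?K'" and b=b and x="\<lambda>j. one_vec j - z j"] by auto
  define y2 where "y2 = y'(i := z)"
  have s2: "\<And>f. (\<Sum>k\<in>?K'. f (y2 k)) = (\<Sum>k\<in>?K'. f (y' k))"
    by (rule sum.cong) (auto simp: y2_def)
  have "(\<Sum>k\<in>?K. b k (y2 k)) \<le> welfare b ?K one_vec"
  proof (rule welfare_ge)
    show "finite ?K" by simp
    show "\<forall>k\<in>?K. binary (y2 k)" using y'b zb by (auto simp: y2_def)
    show "\<forall>j. (\<Sum>k\<in>?K. y2 k j) \<le> one_vec j"
    proof
      fix j
      have "(\<Sum>k\<in>?K'. y2 k j) = (\<Sum>k\<in>?K'. y' k j)" by (rule sum.cong) (auto simp: y2_def)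
      then have "(\<Sum>k\<in>?K. y2 k j) = z j + (\<Sum>k\<in>?K'. y' k j)"
        using split[of "\<lambda>k. y2 k j"] by (simp add: y2_def)
      then show "(\<Sum>k\<in>?K. y2 k j) \<le> one_vec j" using y'f[rule_format, of j] zb1[rule_format, of j] unfolding one_vec_def by arith
    qed
  qed
  moreover have "(\<Sum>k\<in>?K. b k (y2 k)) = b i z + (\<Sum>k\<in>?K'. b k (y' k))"
  proof -
    have "(\<Sum>k\<in>?K'. b k (y2 k)) = (\<Sum>k\<in>?K'. b k (y' k))" by (rule sum.cong) (auto simp: y2_def)
    then show ?thesis using split[of "\<lambda>k. b k (y2 k)"] by (simp add: y2_def)
  qed
  ultimately have WN: "b i z + welfare b ?K' (\<lambda>j. one_vec j - z j) \<le> welfare b ?K one_vec"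
    using y'W by simp
  have sm: "welfare b ?K' (\<lambda>j. max (one_vec j - z j) (c j)) + welfare b ?K' (\<lambda>j. min (one_vec j - z j) (c j))
         \<le> welfare b ?K' (\<lambda>j. one_vec j - z j) + welfare b ?K' c"
    by (rule welfare_submod[OF val gs]) (use c in \<open>auto simp: binary_def one_vec_def\<close>)
  have e1: "(\<lambda>j. max (one_vec j - z j) (c j)) = one_vec"
  proof
    fix j show "max (one_vec j - z j) (c j) = one_vec j"
      using zc[rule_format, of j] zb1[rule_format, of j] c1[rule_format, of j]
      by (auto simp: one_vec_def max_def min_def)
  qed
  have e2: "(\<lambda>j. min (one_vec j - z j) (c j)) = (\<lambda>j. c j - z j)"
  proof
    fix j show "min (one_vec j - z j) (c j) = c j - z j"
      using zc[rule_format, of j] zb1[rule_format, of j] c1[rule_format, of j]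
      by (auto simp: one_vec_def max_def min_def)
  qed
  show ?thesis using sm e1 e2 Wc WN by simp
qed

lemma main_reduction:
  fixes b :: "nat \<Rightarrow> ('m::finite \<Rightarrow> nat) \<Rightarrow> real"
    and xs :: "nat \<Rightarrow> 'm \<Rightarrow> nat"
    and n :: nat
  assumes val: "\<forall>i<n. valuation (b i)"
    and gs: "\<forall>i<n. gross_substitutes (b i)"
    and bin: "\<forall>i<n. binary (xs i)"
    and part: "\<forall>j. (\<Sum>i<n. xs i j) = one_vec j"
  shows "(\<Sum>i<n. marginal (welfare b ({..<n} - {i})) (xs i) (\<lambda>j. one_vec j - xs i j))
           \<le> welfare b {..<n} one_vec"
proof -
  let ?W = "welfare b {..<n}"
  define S where "S i = (\<lambda>j. \<Sum>k<i. xs k j)" for i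
  have S1: "S i j \<le> 1" if "i \<le> n" for i j
  proof -
    have "S i j \<le> (\<Sum>k<n. xs k j)" unfolding S_def
      by (rule sum_mono2) (use that in auto)
    then show ?thesis using part by (simp add: one_vec_def)
  qed
  have xs1: "xs i j \<le> 1" if "i < n" for i j using bin that by (simp add: binary_def)
  have stepa: "?W one_vec - ?W (\<lambda>j. one_vec j - xs i j) \<le> ?W (S (Suc i)) - ?W (S i)"
    if i: "i < n" for i
  proof -
    have sm: "?W (\<lambda>j. max (S (Suc i) j) (one_vec j - xs i j)) + ?W (\<lambda>j. min (S (Suc i) j) (one_vec j - xs i j))
        \<le> ?W (S (Suc i)) + ?W (\<lambda>j. one_vec j - xs i j)"
      by (rule welfare_submod[OF val gs]) (use S1 i in \<open>auto simp: binary_def one_vec_def\<close>)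
    have e1: "(\<lambda>j. max (S (Suc i) j) (one_vec j - xs i j)) = one_vec"
    proof
      fix j
      have "S (Suc i) j = S i j + xs i j" by (simp add: S_def)
      then show "max (S (Suc i) j) (one_vec j - xs i j) = one_vec j"
        using S1[of "Suc i" j] xs1[of i j] i by (auto simp: one_vec_def max_def)
    qed
    have e2: "(\<lambda>j. min (S (Suc i) j) (one_vec j - xs i j)) = S i"
    proof
      fix j
      have "S (Suc i) j = S i j + xs i j" by (simp add: S_def)
      then show "min (S (Suc i) j) (one_vec j - xs i j) = S i j"
        using S1[of "Suc i" j] xs1[of i j] i by (auto simp: one_vec_def min_def)
    qed
    show ?thesis using sm e1 e2 by simp
  qed
  have m: "marginal (welfare b ({..<n} - {i})) (xs i) (\<lambda>j. one_vec j - xs i j)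
      = welfare b ({..<n} - {i}) one_vec - welfare b ({..<n} - {i}) (\<lambda>j. one_vec j - xs i j)"
    if i: "i < n" for i
  proof -
    have "(\<lambda>j. xs i j + (one_vec j - xs i j)) = one_vec"
      using xs1[OF i] by (auto simp: one_vec_def)
    then show ?thesis by (simp add: marginal_def)
  qed
  have bc: "binary (\<lambda>j. one_vec j - xs i j)" for i by (auto simp: binary_def one_vec_def)
  have A: "(\<Sum>i<n. marginal (welfare b ({..<n} - {i})) (xs i) (\<lambda>j. one_vec j - xs i j))
      \<le> (\<Sum>i<n. ?W (S (Suc i)) - ?W (S i))"
  proof (rule sum_mono)
    fix i assume "i \<in> {..<n}"
    then have i: "i < n" by simp
    show "marginal (welfare b ({..<n} - {i})) (xs i) (\<lambda>j. one_vec j - xs i j) \<le> ?W (S (Suc i)) - ?W (S i)"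
      using m[OF i] step_b[OF val gs i bc[of i]] stepa[OF i] by linarith
  qed
  have B: "(\<Sum>i<n. ?W (S (Suc i)) - ?W (S i)) = ?W (S n) - ?W (S 0)" by (rule sum_lessThan_telescope)
  have C: "S n = one_vec" using part by (auto simp: S_def)
  have D: "?W (S 0) \<ge> 0"
  proof -
    have "(\<Sum>k\<in>{..<n}. b k ((\<lambda>_ _. 0) k)) \<le> ?W (S 0)"
      by (rule welfare_ge) (auto simp: binary_def S_def)
    moreover have "(\<Sum>k\<in>{..<n}. b k ((\<lambda>_ _. 0) k)) = 0"
      using val by (auto simp: valuation_def)
    ultimately show ?thesis by simp
  qed
  show ?thesis using A B C D by simp
qed


theorem lemma2:
  fixes b :: "nat \<Rightarrow> ('m::finite \<Rightarrow> nat) \<Rightarrow> real"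
    and xs :: "nat \<Rightarrow> 'm \<Rightarrow> nat"
    and n :: nat
  assumes val: "\<forall>i<n. valuation (b i)"
    and gs: "\<forall>i<n. gross_substitutes (b i)"
    and bin: "\<forall>i<n. binary (xs i)"
    and part: "\<forall>j. (\<Sum>i<n. xs i j) = one_vec j"
  shows "(\<Sum>i<n. marginal (welfare b ({..<n} - {i})) (xs i) (\<lambda>j. one_vec j - xs i j))
           \<le> welfare b {..<n} one_vec"
  by (rule main_reduction[OF val gs bin part])

end
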